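(* Let $G$ be a finite, simple, connected, non-trivial graph with weak total metric dimension $m=\dim_{wt}(G)$ and diameter $D=\mathrm{diam}(G)$. Then: (1) $|V(G)|\le D^m+m$; (2) the maximum degree of $G$ satisfies $\Delta(G)\le 3^m-1$; (3) $G$ has a proper vertex coloring with at most $2^m$ colors.
   Context: All graphs are finite, simple, connected and non-trivial; $d(x,y)$ is the shortest-path distance. A vertex $x$ resolves two vertices $y,z$ if $d(y,x)\ne d(z,x)$. A set $W\subseteq V(G)$ is a resolving set if every two distinct vertices of $G$ are resolved by some element of $W$. A set $W$ is a weak total resolving set (WTR-set) if $W$ is a resolving set and, for every $w\in W$ and every $x\in V(G)\setminus W$, there is $w'\in W\setminus\{w\}$ with $d(x,w')\ne d(w,w')$. The weak total metric dimension $\dim_{wt}(G)$ is the minimum cardinality of a WTR-set for $G$. *)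

theory Defs
  imports Main
begin

definition simple_graph :: "'a set \<Rightarrow> ('a \<Rightarrow> 'a \<Rightarrow> bool) \<Rightarrow> bool" where
  "simple_graph V E \<longleftrightarrow> finite V \<and> (\<forall>x y. E x y \<longrightarrow> x \<in> V \<and> y \<in> V)
     \<and> (\<forall>x y. E x y \<longrightarrow> E y x) \<and> (\<forall>x. \<not> E x x)"

definition connected_graph :: "'a set \<Rightarrow> ('a \<Rightarrow> 'a \<Rightarrow> bool) \<Rightarrow> bool" where
  "connected_graph V E \<longleftrightarrow> (\<forall>x\<in>V. \<forall>y\<in>V. \<exists>n. (E ^^ n) x y)"

definition dist :: "('a \<Rightarrow> 'a \<Rightarrow> bool) \<Rightarrow> 'a \<Rightarrow> 'a \<Rightarrow> nat" where
  "dist E x y = (LEAST n. (E ^^ n) x y)"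

definition resolves :: "('a \<Rightarrow> 'a \<Rightarrow> bool) \<Rightarrow> 'a \<Rightarrow> 'a \<Rightarrow> 'a \<Rightarrow> bool" where
  "resolves E x y z \<longleftrightarrow> dist E y x \<noteq> dist E z x"

definition resolving_set :: "'a set \<Rightarrow> ('a \<Rightarrow> 'a \<Rightarrow> bool) \<Rightarrow> 'a set \<Rightarrow> bool" where
  "resolving_set V E W \<longleftrightarrow> W \<subseteq> V \<and>
     (\<forall>y\<in>V. \<forall>z\<in>V. y \<noteq> z \<longrightarrow> (\<exists>w\<in>W. resolves E w y z))"

definition wtr_set :: "'a set \<Rightarrow> ('a \<Rightarrow> 'a \<Rightarrow> bool) \<Rightarrow> 'a set \<Rightarrow> bool" where
  "wtr_set V E W \<longleftrightarrow> resolving_set V E W \<and>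
     (\<forall>w\<in>W. \<forall>x\<in>V - W. \<exists>w'\<in>W - {w}. dist E x w' \<noteq> dist E w w')"

definition dim_wt :: "'a set \<Rightarrow> ('a \<Rightarrow> 'a \<Rightarrow> bool) \<Rightarrow> nat" where
  "dim_wt V E = (LEAST k. \<exists>W. wtr_set V E W \<and> card W = k)"

definition diam :: "'a set \<Rightarrow> ('a \<Rightarrow> 'a \<Rightarrow> bool) \<Rightarrow> nat" where
  "diam V E = Max {dist E x y | x y. x \<in> V \<and> y \<in> V}"

definition degree :: "('a \<Rightarrow> 'a \<Rightarrow> bool) \<Rightarrow> 'a \<Rightarrow> nat" where
  "degree E x = card {y. E x y}"

definition max_degree :: "'a set \<Rightarrow> ('a \<Rightarrow> 'a \<Rightarrow> bool) \<Rightarrow> nat" where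
  "max_degree V E = Max (degree E ` V)"

definition proper_coloring :: "'a set \<Rightarrow> ('a \<Rightarrow> 'a \<Rightarrow> bool) \<Rightarrow> ('a \<Rightarrow> nat) \<Rightarrow> nat \<Rightarrow> bool" where
  "proper_coloring V E c k \<longleftrightarrow> (\<forall>x\<in>V. c x < k) \<and>
     (\<forall>x\<in>V. \<forall>y\<in>V. E x y \<longrightarrow> c x \<noteq> c y)"

end

theory Submission
  imports Defs "HOL-Library.FuncSet"
begin

lemma dist_path:
  assumes "connected_graph V E" "x \<in> V" "y \<in> V"
  shows "(E ^^ dist E x y) x y"
  using assms unfolding dist_def connected_graph_def by (meson LeastI_ex)

lemma dist_self: "dist E x x = 0"
  unfolding dist_def by (rule Least_eq_0) (rule relpowp_0_I)

lemma dist_0: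
  assumes "connected_graph V E" "x \<in> V" "y \<in> V" "dist E x y = 0"
  shows "x = y"
  using dist_path[OF assms(1-3)] assms(4) by (metis relpowp_0_E)

lemma dist_adj:
  assumes "connected_graph V E" "y \<in> V" "w \<in> V" "E x y"
  shows "dist E x w \<le> Suc (dist E y w)"
proof -
  have "(E ^^ Suc (dist E y w)) x w"
    using dist_path[OF assms(1-3)] assms(4) by (rule relpowp_Suc_I2[rotated])
  then show ?thesis unfolding dist_def by (rule Least_le)
qed

lemma dist_adj2:
  assumes "simple_graph V E" "connected_graph V E" "w \<in> V" "E x y"
  shows "\<bar>int (dist E x w) - int (dist E y w)\<bar> \<le> 1"
proof -
  have xy: "x \<in> V" "y \<in> V" "E y x" using assms(1,4) unfolding simple_graph_def by auto
  have "dist E x w \<le> Suc (dist E y w)" using dist_adj[OF assms(2) xy(2) assms(3) assms(4)] .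
  moreover have "dist E y w \<le> Suc (dist E x w)" using dist_adj[OF assms(2) xy(1) assms(3) xy(3)] .
  ultimately show ?thesis by linarith
qed

theorem proposition1:
  fixes V :: "'a set" and E :: "'a \<Rightarrow> 'a \<Rightarrow> bool"
  assumes "simple_graph V E" and "connected_graph V E" and "card V \<ge> 2"
  defines "m \<equiv> dim_wt V E" and "D \<equiv> diam V E"
  shows "card V \<le> D ^ m + m \<and> max_degree V E \<le> 3 ^ m - 1
         \<and> (\<exists>c. proper_coloring V E c (2 ^ m))"
proof -
  have finV: "finite V" using assms(1) unfolding simple_graph_def by auto
  have irr: "\<And>x. \<not> E x x" using assms(1) unfolding simple_graph_def by auto
  have inV: "\<And>x y. E x y \<Longrightarrow> x \<in> V \<and> y \<in> V" using assms(1) unfolding simple_graph_def by auto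
  have "wtr_set V E V"
    unfolding wtr_set_def resolving_set_def resolves_def
  proof (intro conjI ballI impI)
    fix y z assume yz: "y \<in> V" "z \<in> V" "y \<noteq> z"
    have "dist E y y \<noteq> dist E z y"
      using dist_0[OF assms(2) yz(2) yz(1)] yz(3) by (auto simp: dist_self)
    then show "\<exists>w\<in>V. dist E y w \<noteq> dist E z w" using yz by blast
  qed auto
  then have "\<exists>W. wtr_set V E W \<and> card W = card V" by blast
  then have ex: "\<exists>k. \<exists>W. wtr_set V E W \<and> card W = k" by blast
  have "\<exists>W. wtr_set V E W \<and> card W = m"
    unfolding m_def dim_wt_def by (rule LeastI_ex[OF ex])
  then obtain W where W: "wtr_set V E W" "card W = m" by blast
  have WV: "W \<subseteq> V" using W(1) unfolding wtr_set_def resolving_set_def by auto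
  have finW: "finite W" using WV finV finite_subset by auto
  have res: "\<And>y z. y \<in> V \<Longrightarrow> z \<in> V \<Longrightarrow> y \<noteq> z \<Longrightarrow> \<exists>w\<in>W. dist E y w \<noteq> dist E z w"
    using W(1) unfolding wtr_set_def resolving_set_def resolves_def by blast
  have finD: "finite {dist E x y | x y. x \<in> V \<and> y \<in> V}"
    using finV by (intro finite_image_set2) auto
  have leD: "\<And>x y. x \<in> V \<Longrightarrow> y \<in> V \<Longrightarrow> dist E x y \<le> D"
    unfolding D_def diam_def using finD by (intro Max_ge) auto
  have p1: "card V \<le> D ^ m + m"
  proof -
    let ?f = "\<lambda>x. restrict (\<lambda>w. dist E x w) W"
    have inj: "inj_on ?f (V - W)"
    proof
      fix x y assume xy: "x \<in> V - W" "y \<in> V - W" "?f x = ?f y"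
      show "x = y"
      proof (rule ccontr)
        assume "x \<noteq> y"
        then obtain w where "w \<in> W" "dist E x w \<noteq> dist E y w" using res xy by blast
        then show False using fun_cong[OF xy(3), of w] by simp
      qed
    qed
    have img: "?f ` (V - W) \<subseteq> PiE W (\<lambda>_. {1..D})"
    proof
      fix g assume "g \<in> ?f ` (V - W)"
      then obtain x where x: "x \<in> V - W" "g = ?f x" by blast
      have "\<And>w. w \<in> W \<Longrightarrow> dist E x w \<in> {1..D}"
      proof -
        fix w assume w: "w \<in> W"
        have "dist E x w \<noteq> 0" using dist_0[OF assms(2), of x w] x w WV by auto
        moreover have "dist E x w \<le> D" using leD x w WV by auto
        ultimately show "dist E x w \<in> {1..D}" by auto
      qed
      then show "g \<in> PiE W (\<lambda>_. {1..D})" using x by auto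
    qed
    have "card (V - W) \<le> card (PiE W (\<lambda>_. {1..D}))"
      using card_inj_on_le[OF inj img] finW by (simp add: finite_PiE)
    also have "\<dots> = D ^ m" using finW W(2) by (simp add: card_PiE)
    finally have "card (V - W) \<le> D ^ m" .
    moreover have "card V = card (V - W) + card W"
      using WV finV by (metis card_Diff_subset finite_subset le_add_diff_inverse2 card_mono)
    ultimately show ?thesis using W(2) by simp
  qed
  have p2: "max_degree V E \<le> 3 ^ m - 1"
    unfolding max_degree_def
  proof (rule Max.boundedI)
    show "finite (degree E ` V)" using finV by simp
    show "degree E ` V \<noteq> {}" using assms(3) by auto
  next
    fix k assume "k \<in> degree E ` V"
    then obtain x where x: "x \<in> V" "k = degree E x" by blast
    let ?f = "\<lambda>u. restrict (\<lambda>w. int (dist E u w) - int (dist E x w)) W"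
    let ?P = "PiE W (\<lambda>_. {-1,0,1::int}) - {restrict (\<lambda>w. 0) W}"
    have inj: "inj_on ?f {y. E x y}"
    proof
      fix u v assume uv: "u \<in> {y. E x y}" "v \<in> {y. E x y}" "?f u = ?f v"
      show "u = v"
      proof (rule ccontr)
        assume "u \<noteq> v"
        then obtain w where "w \<in> W" "dist E u w \<noteq> dist E v w" using res uv inV by blast
        then show False using fun_cong[OF uv(3), of w] by simp
      qed
    qed
    have img: "?f ` {y. E x y} \<subseteq> ?P"
    proof
      fix g assume "g \<in> ?f ` {y. E x y}"
      then obtain u where u: "E x u" "g = ?f u" by blast
      have "\<And>w. w \<in> W \<Longrightarrow> int (dist E u w) - int (dist E x w) \<in> {-1,0,1}"
      proof -
        fix w assume w: "w \<in> W"
        have "\<bar>int (dist E u w) - int (dist E x w)\<bar> \<le> 1"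
          using dist_adj2[OF assms(1,2), of w u x] w WV u inV assms(1)
          unfolding simple_graph_def by auto
        then show "int (dist E u w) - int (dist E x w) \<in> {-1,0,1}" by auto
      qed
      then have "g \<in> PiE W (\<lambda>_. {-1,0,1::int})" using u by auto
      moreover have "g \<noteq> restrict (\<lambda>w. 0) W"
      proof
        assume g0: "g = restrict (\<lambda>w. 0) W"
        have "u \<noteq> x" using u irr by auto
        then obtain w where "w \<in> W" "dist E u w \<noteq> dist E x w" using res u inV by blast
        then show False using fun_cong[OF g0, of w] u by simp
      qed
      ultimately show "g \<in> ?P" by blast
    qed
    have "degree E x \<le> card ?P"
      unfolding degree_def using card_inj_on_le[OF inj img] finW by (simp add: finite_PiE)
    also have "\<dots> = 3 ^ m - 1"
    proof -
      have "restrict (\<lambda>w. 0::int) W \<in> PiE W (\<lambda>_. {-1,0,1::int})" by auto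
      then have "card ?P = card (PiE W (\<lambda>_. {-1,0,1::int})) - 1"
        using finW by (simp add: card_Diff_singleton finite_PiE)
      also have "\<dots> = 3 ^ m - 1" using finW W(2) by (simp add: card_PiE numeral_3_eq_3)
      finally show ?thesis .
    qed
    finally show "k \<le> 3 ^ m - 1" using x by simp
  qed
  have p3: "\<exists>c. proper_coloring V E c (2 ^ m)"
  proof -
    obtain h where h: "bij_betw h (Pow W) {0..<card (Pow W)}"
      using ex_bij_betw_finite_nat finW by blast
    have cP: "card (Pow W) = 2 ^ m" using finW W(2) by (simp add: card_Pow)
    define c where "c x = h {w \<in> W. odd (dist E x w)}" for x
    have "proper_coloring V E c (2 ^ m)"
      unfolding proper_coloring_def
    proof (intro conjI ballI impI)
      fix x assume "x \<in> V"
      have "{w \<in> W. odd (dist E x w)} \<in> Pow W" by auto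
      then show "c x < 2 ^ m" using h cP unfolding c_def bij_betw_def by auto
    next
      fix x y assume xy: "x \<in> V" "y \<in> V" "E x y"
      show "c x \<noteq> c y"
      proof
        assume "c x = c y"
        then have eq: "{w \<in> W. odd (dist E x w)} = {w \<in> W. odd (dist E y w)}"
          using h unfolding c_def bij_betw_def inj_on_def by auto
        have "x \<noteq> y" using xy irr by auto
        then obtain w where w: "w \<in> W" "dist E x w \<noteq> dist E y w" using res xy by blast
        have par: "odd (dist E x w) = odd (dist E y w)" using eq w(1) by blast
        have "\<bar>int (dist E x w) - int (dist E y w)\<bar> \<le> 1"
          using dist_adj2[OF assms(1,2), of w x y] w WV xy by auto
        then have "dist E x w = dist E y w \<or> dist E x w = Suc (dist E y w) \<or> dist E y w = Suc (dist E x w)"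
          by linarith
        then show False using par w(2) by auto
      qed
    qed
    then show ?thesis by blast
  qed
  show ?thesis using p1 p2 p3 by blast
qed

end
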